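(* Let $n\ge 2$, $\delta\in(0,1/2)$, let $g$ be admissible with $$-\infty<\liminf_{x\downarrow 0}x g(x)\le\limsup_{x\downarrow 0}x g(x)<0,$$ and let $X$ be the market model driven by $g$ with all $\mu_i(0)\in(0,1-\delta)$. Then, almost surely, no market weight $\mu_i$ ever reaches $0$ (up to the first time some market weight reaches $1-\delta$).
   Context: Fix an integer $n\ge 2$ and $\delta\in(0,1)$. A continuous function $g:(0,1-\delta)\to\mathbb{R}$ is called admissible if $\lim_{x\uparrow 1-\delta}g(x)=+\infty$. Let $W=(W_1,\dots,W_n)$ be an $n$-dimensional standard Brownian motion on a filtered probability space whose filtration satisfies the usual conditions and is generated by $W$. The market model driven by $g$ is an $(0,\infty)^n$-valued continuous process $X(t)=(X_1(t),\dots,X_n(t))$ satisfying $$d\log X_i(t)=-g(\mu_i(t))\,dt+dW_i(t),\qquad i=1,\dots,n,$$ where $S(t)=X_1(t)+\dots+X_n(t)$ and $\mu_i(t)=X_i(t)/S(t)$ are the market weights (the equation makes sense as long as all $\mu_i(t)\in(0,1-\delta)$). *)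

theory Defs
  imports "HOL-Probability.Probability"
begin

definition admissible :: "real \<Rightarrow> (real \<Rightarrow> real) \<Rightarrow> bool" where
  "admissible \<delta> g \<longleftrightarrow> continuous_on {0<..<1-\<delta>} g \<and> filterlim g at_top (at_left (1-\<delta>))"

definition std_BM :: "'a measure \<Rightarrow> nat \<Rightarrow> (nat \<Rightarrow> real \<Rightarrow> 'a \<Rightarrow> real) \<Rightarrow> bool" where
  "std_BM M n W \<longleftrightarrow>
     (\<forall>i<n. \<forall>t\<ge>0. W i t \<in> borel_measurable M) \<and>
     (\<forall>\<omega>\<in>space M. \<forall>i<n. W i 0 \<omega> = 0 \<and> continuous_on {0..} (\<lambda>t. W i t \<omega>)) \<and>
     (\<forall>i<n. \<forall>s t. 0 \<le> s \<and> s < t \<longrightarrow>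
        distributed M lborel (\<lambda>\<omega>. W i t \<omega> - W i s \<omega>)
          (\<lambda>x. ennreal (normal_density 0 (sqrt (t - s)) x))) \<and>
     (\<forall>ts :: real list. sorted_wrt (<) ts \<and> ts \<noteq> [] \<and> 0 \<le> hd ts \<longrightarrow>
        prob_space.indep_vars M (\<lambda>_. borel)
          (\<lambda>(i, k) \<omega>. W i (ts ! Suc k) \<omega> - W i (ts ! k) \<omega>)
          ({..<n} \<times> {..<length ts - 1}))"

definition bm_gen :: "'a measure \<Rightarrow> nat \<Rightarrow> (nat \<Rightarrow> real \<Rightarrow> 'a \<Rightarrow> real) \<Rightarrow> real \<Rightarrow> 'a set set" where
  "bm_gen M n W t = {(\<lambda>\<omega>. W i s \<omega>) -` B \<inter> space M | i s B. i < n \<and> 0 \<le> s \<and> s \<le> t \<and> B \<in> sets borel}"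

text \<open>Usual augmentation of the natural filtration of W (right-continuous, completed
  with all null sets of M).\<close>
definition bm_filt :: "'a measure \<Rightarrow> nat \<Rightarrow> (nat \<Rightarrow> real \<Rightarrow> 'a \<Rightarrow> real) \<Rightarrow> real \<Rightarrow> 'a set set" where
  "bm_filt M n W t = {A. A \<subseteq> space M \<and> (\<exists>B N.
      B \<in> (\<Inter>u\<in>{t<..}. sigma_sets (space M) (bm_gen M n W u)) \<and> N \<in> null_sets M \<and>
      (A - B) \<union> (B - A) \<subseteq> N)}"

definition adapted_to :: "'a measure \<Rightarrow> (real \<Rightarrow> 'a set set) \<Rightarrow> (real \<Rightarrow> 'a \<Rightarrow> real) \<Rightarrow> bool" where
  "adapted_to M F Y \<longleftrightarrow> (\<forall>t\<ge>0. \<forall>B\<in>sets borel. (Y t) -` B \<inter> space M \<in> F t)"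

definition cap :: "nat \<Rightarrow> (nat \<Rightarrow> real \<Rightarrow> 'a \<Rightarrow> real) \<Rightarrow> real \<Rightarrow> 'a \<Rightarrow> real" where
  "cap n X t \<omega> = (\<Sum>j<n. X j t \<omega>)"

definition mweight :: "nat \<Rightarrow> (nat \<Rightarrow> real \<Rightarrow> 'a \<Rightarrow> real) \<Rightarrow> nat \<Rightarrow> real \<Rightarrow> 'a \<Rightarrow> real" where
  "mweight n X i t \<omega> = X i t \<omega> / cap n X t \<omega>"

definition solves_on :: "nat \<Rightarrow> real \<Rightarrow> (real \<Rightarrow> real) \<Rightarrow> (nat \<Rightarrow> real \<Rightarrow> 'a \<Rightarrow> real)
    \<Rightarrow> (nat \<Rightarrow> real \<Rightarrow> 'a \<Rightarrow> real) \<Rightarrow> real \<Rightarrow> 'a \<Rightarrow> bool" where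
  "solves_on n \<delta> g W X T \<omega> \<longleftrightarrow>
     (\<forall>i<n. continuous_on {0..<T} (\<lambda>t. X i t \<omega>)) \<and>
     (\<forall>i<n. \<forall>t\<in>{0..<T}. X i t \<omega> > 0 \<and> mweight n X i t \<omega> \<in> {0<..<1-\<delta>}) \<and>
     (\<forall>i<n. \<forall>t\<in>{0..<T}.
        ln (X i t \<omega>) = ln (X i 0 \<omega>) - integral {0..t} (\<lambda>s. g (mweight n X i s \<omega>))
                          + (W i t \<omega> - W i 0 \<omega>))"

end

theory Submission
  imports Defs
begin

lemma g_low:
  assumes "admissible \<delta> g" "0 < a" "\<delta> > 0"
  shows "\<exists>L. \<forall>y\<in>{a..<1-\<delta>}. g y \<ge> -L"
proof -
  have cont: "continuous_on {0<..<1-\<delta>} g" and lim: "filterlim g at_top (at_left (1-\<delta>))"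
    using assms(1) unfolding admissible_def by auto
  have "\<forall>\<^sub>F y in at_left (1-\<delta>). 0 \<le> g y" using lim unfolding filterlim_at_top by blast
  then obtain b where b: "b < 1-\<delta>" "\<forall>y>b. y < 1-\<delta> \<longrightarrow> 0 \<le> g y"
    using eventually_at_left[of "1-\<delta>-1" "1-\<delta>"] by auto
  define c where "c = max a ((b + (1-\<delta>))/2)"
  show ?thesis
  proof (cases "a < 1 - \<delta>")
    case False then show ?thesis by auto
  next
    case True
    have sub: "{a..c} \<subseteq> {0<..<1-\<delta>}" using True b assms(2) by (auto simp: c_def max_def split: if_splits)
    have "compact (g ` {a..c})" by (rule compact_continuous_image[OF continuous_on_subset[OF cont sub]]) auto
    then obtain K where K: "\<forall>z\<in>g ` {a..c}. norm z \<le> K" using compact_imp_bounded bounded_iff by metis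
    show ?thesis
    proof (rule exI[of _ "\<bar>K\<bar>"], intro ballI)
      fix y assume y: "y \<in> {a..<1-\<delta>}"
      show "g y \<ge> - \<bar>K\<bar>"
      proof (cases "y \<le> c")
        case True then have "norm (g y) \<le> K" using K y by auto
        then show ?thesis by auto
      next
        case False then have "y > b" using b by (auto simp: c_def max_def split: if_splits)
        then show ?thesis using b y by force
      qed
    qed
  qed
qed

lemma g_high:
  assumes "Limsup (at_right 0) (\<lambda>x. ereal (x * g x)) < 0"
  shows "\<exists>\<eta>>0. \<forall>y\<in>{0<..<\<eta>}. g y < -L"
proof -
  obtain c where c: "Limsup (at_right 0) (\<lambda>x. ereal (x * g x)) < ereal c" "ereal c < 0"
    using ereal_dense2[OF assms] by blast
  have "\<forall>\<^sub>F x in at_right 0. ereal (x * g x) < ereal c" using Limsup_lessD[OF c(1)] .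
  then obtain b where b: "b > 0" "\<forall>y>0. y < b \<longrightarrow> y * g y < c"
    using eventually_at_right[of "0::real" 1] by auto
  have c0: "c < 0" using c(2) by simp
  define L' where "L' = max L 1"
  define \<eta> where "\<eta> = min b (-c / L')"
  have L'pos: "L' > 0" by (simp add: L'_def)
  have "-c/L' > 0" using c0 L'pos by (simp add: divide_neg_pos)
  then have "\<eta> > 0" using b by (simp add: \<eta>_def)
  moreover have "g y < -L" if y: "y \<in> {0<..<\<eta>}" for y
  proof -
    have yb: "y*g y < c" using b y by (auto simp: \<eta>_def)
    have "y < -c/L'" using y by (auto simp: \<eta>_def)
    then have "y * L' < -c" using L'pos by (metis minus_divide_left pos_less_divide_eq)
    then have "y * g y < - (y * L')" using yb by linarith
    then have "g y < -L'" using y mult_less_cancel_left_pos[of y "g y" "-L'"] by simp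
    then show ?thesis by (simp add: L'_def)
  qed
  ultimately show ?thesis by blast
qed
lemma ln_diff_le_imp: fixes a b c :: real
  assumes "a > 0" "b > 0" "ln a - ln b \<le> c" shows "a \<le> exp c * b"
proof -
  have "ln a \<le> ln (exp c * b)" using assms by (simp add: ln_mult)
  then show ?thesis using assms by (simp add: ln_le_cancel_iff)
qed

lemma weight_lb: fixes x :: "nat \<Rightarrow> real"
  assumes "n > 0" "j < n" "x j > 0" "C > 0" "\<forall>k<n. x k \<le> C * x j" "\<forall>k<n. x k > 0"
  shows "1 / (real n * C) \<le> x j / (\<Sum>k<n. x k)"
proof -
  have "(\<Sum>k<n. x k) \<le> real (card {..<n}) * (C * x j)"
    by (rule sum_bounded_above) (use assms in auto)
  then have S: "(\<Sum>k<n. x k) \<le> real n * C * x j" by simp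
  have Sp: "(\<Sum>k<n. x k) > 0" using assms by (intro sum_pos) auto
  have xj0: "x j \<noteq> 0" using assms(3) by simp
  have "1 / (real n * C) = x j / (real n * C * x j)" using xj0 by simp
  also have "\<dots> \<le> x j / (\<Sum>k<n. x k)"
    using S Sp assms(3) by (intro divide_left_mono) auto
  finally show ?thesis .
qed

lemma core:
  fixes x w :: "nat \<Rightarrow> real \<Rightarrow> real" and g :: "real \<Rightarrow> real"
  assumes n0: "n > 0" and T: "T > 0"
    and xc: "\<forall>k<n. continuous_on {0..<T} (x k)"
    and wc: "\<forall>k<n. continuous_on {0..<T} (w k)"
    and xpos: "\<forall>k<n. \<forall>t\<in>{0..<T}. x k t > 0"
    and mur: "\<forall>k<n. \<forall>t\<in>{0..<T}. x k t / (\<Sum>j<n. x j t) \<in> {0<..<1-\<delta>}"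
    and eq: "\<forall>k<n. \<forall>t\<in>{0..<T}. ln (x k t) = ln (x k 0) - integral {0..t} (\<lambda>s. g (x k s / (\<Sum>j<n. x j s))) + w k t"
    and wb: "\<forall>k<n. \<forall>t\<in>{0..<T}. \<bar>w k t\<bar> \<le> B"
    and gc: "continuous_on {0<..<1-\<delta>} g"
    and glow: "\<forall>y\<in>{exp(-2*B)/n..<1-\<delta>}. g y \<ge> -L"
    and eta: "\<eta> > 0" and ghigh: "\<forall>y\<in>{0<..<\<eta>}. g y < -L"
    and i: "i < n"
  shows "\<exists>\<epsilon>>0. \<forall>t\<in>{0..<T}. x i t / (\<Sum>j<n. x j t) \<ge> \<epsilon>"
proof -
  define S where "S t = (\<Sum>j<n. x j t)" for t
  define mu where "mu k t = x k t / S t" for k t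
  define D where "D k t = ln (x k 0) - integral {0..t} (\<lambda>s. g (mu k s))" for k t
  define Q where "Q k t = D i t - D k t" for k t
  have lnx: "ln (x k t) = D k t + w k t" if "k < n" "t \<in> {0..<T}" for k t
  proof -
    have "ln (x k t) = ln (x k 0) - integral {0..t} (\<lambda>s. g (x k s / (\<Sum>j<n. x j s))) + w k t"
      using eq that by blast
    then show ?thesis by (simp only: D_def mu_def S_def)
  qed
  have Spos: "S t > 0" if "t \<in> {0..<T}" for t
    unfolding S_def using xpos that n0 by (intro sum_pos) auto
  have xleS: "x k t \<le> S t" if "k < n" "t \<in> {0..<T}" for k t
    unfolding S_def using xpos that by (intro member_le_sum) (auto intro: less_imp_le)
  have muc: "continuous_on {0..<T} (mu k)" if "k < n" for k
    unfolding mu_def S_def using xc that Spos[unfolded S_def]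
    by (intro continuous_on_divide continuous_on_sum) (auto, force)
  have gmuc: "continuous_on {0..<T} (\<lambda>s. g (mu k s))" if "k < n" for k
    by (rule continuous_on_compose2[OF gc muc[OF that]]) (use mur that in \<open>auto simp: mu_def S_def\<close>)
  have Dc: "continuous_on {0..<T} (D k)" if "k < n" for k
  proof -
    have "continuous_on {0..<T} (\<lambda>t. ln (x k t) - w k t)"
      using xc wc xpos that by (intro continuous_on_diff continuous_on_ln) (auto, force)
    then show ?thesis by (rule continuous_on_cong[THEN iffD1, rotated 2]) (use lnx that in auto)
  qed
  have Qc: "continuous_on {0..<T} (Q k)" if "k < n" for k
    unfolding Q_def using Dc that i by (intro continuous_on_diff) auto
  have wdiff: "\<bar>w k t - w l t\<bar> \<le> 2*B" if "k < n" "l < n" "t \<in> {0..<T}" for k l t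
    using wb that by (smt (verit))
  define q where "q = -(\<Sum>k<n. \<bar>Q k 0\<bar>) - \<bar>ln \<eta> - 2*B\<bar> - 1"
  have Q0: "Q k 0 > q" if "k < n" for k
  proof -
    have "\<bar>Q k 0\<bar> \<le> (\<Sum>k<n. \<bar>Q k 0\<bar>)" using that by (intro member_le_sum) auto
    then show ?thesis unfolding q_def by linarith
  qed
  have qeta: "q + 2*B < ln \<eta>" unfolding q_def
    by (smt (verit) sum_nonneg abs_ge_zero)
  have main: "\<forall>t\<in>{0..<T}. \<forall>k<n. Q k t > q"
  proof (rule ccontr)
    assume "\<not> ?thesis"
    then obtain t1 k1 where t1: "t1 \<in> {0..<T}" "k1 < n" "Q k1 t1 \<le> q" by force
    define A where "A = (\<Union>k\<in>{..<n}. {0..t1} \<inter> Q k -` {..q})"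
    have clA: "closed A" unfolding A_def
    proof (intro closed_UN ballI)
      fix k assume "k \<in> {..<n}"
      then have "continuous_on {0..t1} (Q k)" using Qc t1 by (intro continuous_on_subset[OF Qc]) auto
      then show "closed ({0..t1} \<inter> Q k -` {..q})" by (intro continuous_closed_preimage) auto
    qed simp
    have t1A: "t1 \<in> A" using t1 unfolding A_def by auto
    have bdd: "bdd_below A" unfolding A_def by (rule bdd_belowI[of _ 0]) auto
    define t0 where "t0 = Inf A"
    have t0A: "t0 \<in> A" unfolding t0_def using closed_contains_Inf[OF _ bdd clA] t1A by blast
    have t0le: "t0 \<le> s" if "s \<in> A" for s unfolding t0_def using bdd that by (rule cInf_lower[rotated])
    obtain k0 where k0: "k0 < n" "t0 \<in> {0..t1}" "Q k0 t0 \<le> q" using t0A unfolding A_def by auto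
    have t0T: "t0 \<in> {0..<T}" using k0 t1 by auto
    have "t0 \<noteq> 0" using Q0[OF k0(1)] k0 by auto
    then have t0pos: "t0 > 0" using k0 by auto
    obtain j where j: "j < n" "\<forall>k<n. Q j t0 \<le> Q k t0"
    proof -
      let ?V = "(\<lambda>k. Q k t0) ` {..<n}"
      have "Min ?V \<in> ?V" using n0 by (intro Min_in) auto
      then obtain j where "j < n" "Q j t0 = Min ?V" by auto
      moreover have "\<forall>k<n. Min ?V \<le> Q k t0" by auto
      ultimately show ?thesis using that by auto
    qed
    have Qj: "Q j t0 \<le> q" using j k0 by force
    have xk: "x k t0 \<le> exp (2*B) * x j t0" if "k < n" for k
    proof (rule ln_diff_le_imp)
      show "x k t0 > 0" "x j t0 > 0" using xpos that j t0T by auto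
      have "ln (x k t0) - ln (x j t0) = Q j t0 - Q k t0 + (w k t0 - w j t0)"
        using lnx[OF that t0T] lnx[OF j(1) t0T] by (simp add: Q_def)
      then show "ln (x k t0) - ln (x j t0) \<le> 2*B" using j that wdiff[OF that j(1) t0T] by auto
    qed
    have "1 / (real n * exp (2*B)) \<le> mu j t0" unfolding mu_def S_def
      by (rule weight_lb) (use n0 j xpos t0T xk in auto)
    moreover have "1 / (real n * exp (2*B)) = exp (-2*B) / n" by (simp add: exp_minus field_simps)
    moreover have "mu j t0 < 1 - \<delta>" using mur j t0T by (auto simp: mu_def S_def)
    ultimately have gj: "g (mu j t0) \<ge> -L" using glow by auto
    have lij: "ln (x i t0) - ln (x j t0) \<le> q + 2*B"
    proof -
      have "ln (x i t0) - ln (x j t0) = Q j t0 + (w i t0 - w j t0)"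
        using lnx[OF i t0T] lnx[OF j(1) t0T] by (simp add: Q_def)
      then show ?thesis using Qj wdiff[OF i j(1) t0T] by auto
    qed
    have xipos: "x i t0 > 0" and xjpos: "x j t0 > 0" using xpos i j t0T by auto
    have "x i t0 \<le> exp (q + 2*B) * x j t0" by (rule ln_diff_le_imp[OF xipos xjpos lij])
    also have "\<dots> < \<eta> * x j t0"
    proof (rule mult_strict_right_mono[OF _ xjpos])
      have "exp (q + 2*B) < exp (ln \<eta>)" using qeta by simp
      then show "exp (q + 2*B) < \<eta>" using eta by simp
    qed
    finally have "x i t0 / x j t0 < \<eta>" using xjpos by (simp add: divide_less_eq)
    moreover have "mu i t0 \<le> x i t0 / x j t0" unfolding mu_def
      using xleS[OF j(1) t0T] xipos xjpos by (intro divide_left_mono) auto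
    moreover have "mu i t0 > 0" using mur i t0T by (auto simp: mu_def S_def)
    ultimately have gi: "g (mu i t0) < -L" using ghigh by auto
    define h where "h s = g (mu j s) - g (mu i s)" for s
    have hpos0: "h t0 > 0" using gi gj by (simp add: h_def)
    have hc: "continuous_on {0..<T} h" unfolding h_def using gmuc i j by (intro continuous_on_diff) auto
    obtain d where d: "d > 0" "\<forall>s\<in>{0..<T}. dist s t0 < d \<longrightarrow> dist (h s) (h t0) < h t0"
      using hc t0T hpos0 unfolding continuous_on_iff by blast
    define s0 where "s0 = max 0 (t0 - d/2)"
    have s0: "0 \<le> s0" "s0 < t0" using t0pos d by (auto simp: s0_def)
    have hnn: "h u \<ge> 0" if "u \<in> {s0..t0}" for u
    proof -
      have "u \<in> {0..<T}" "dist u t0 < d" using that s0 t0T d by (auto simp: dist_real_def s0_def)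
      then have "dist (h u) (h t0) < h t0" using d by auto
      then show ?thesis by (auto simp: dist_real_def)
    qed
    have intg: "(\<lambda>s. g (mu k s)) integrable_on {0..t0}" if "k < n" for k
      using t0T by (intro integrable_continuous_interval continuous_on_subset[OF gmuc[OF that]]) auto
    have comb: "integral {0..t0} (\<lambda>s. g (mu k s)) = integral {0..s0} (\<lambda>s. g (mu k s)) + integral {s0..t0} (\<lambda>s. g (mu k s))"
      if "k < n" for k
      using Henstock_Kurzweil_Integration.integral_combine[OF s0(1) less_imp_le[OF s0(2)] intg[OF that]] by simp
    have intg2: "(\<lambda>s. g (mu k s)) integrable_on {s0..t0}" if "k < n" for k
      by (rule integrable_on_subinterval[OF intg[OF that]]) (use s0 in auto)
    have "Q j t0 - Q j s0 = integral {s0..t0} (\<lambda>s. g (mu j s)) - integral {s0..t0} (\<lambda>s. g (mu i s))"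
      using comb[OF i] comb[OF j(1)] by (simp add: Q_def D_def)
    also have "\<dots> = integral {s0..t0} h"
      unfolding h_def by (rule integral_diff[symmetric]) (use intg2 i j in auto)
    also have "\<dots> \<ge> 0"
      using hnn intg2 i j unfolding h_def by (intro integral_nonneg integrable_diff) auto
    finally have "Q j s0 \<le> Q j t0" by simp
    moreover have "s0 \<notin> A" using t0le s0 by force
    then have "\<forall>k\<in>{..<n}. \<not> Q k s0 \<le> q" using s0 k0 unfolding A_def by auto
    then have "Q j s0 > q" using j(1) by force
    ultimately show False using Qj by simp
  qed
  define \<epsilon> where "\<epsilon> = 1 / (real n * exp (2*B - q))"
  have "\<epsilon> > 0" using n0 by (simp add: \<epsilon>_def)
  moreover have "\<forall>t\<in>{0..<T}. x i t / (\<Sum>j<n. x j t) \<ge> \<epsilon>"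
  proof
    fix t assume t: "t \<in> {0..<T}"
    have xk: "x k t \<le> exp (2*B - q) * x i t" if "k < n" for k
    proof (rule ln_diff_le_imp)
      show "x k t > 0" "x i t > 0" using xpos that i t by auto
      have "ln (x k t) - ln (x i t) = - Q k t + (w k t - w i t)"
        using lnx[OF that t] lnx[OF i t] by (simp add: Q_def)
      then show "ln (x k t) - ln (x i t) \<le> 2*B - q" using main t that wdiff[OF that i t] by force
    qed
    show "x i t / (\<Sum>j<n. x j t) \<ge> \<epsilon>" unfolding \<epsilon>_def
      by (rule weight_lb) (use n0 i xpos t xk in auto)
  qed
  ultimately show ?thesis by blast
qed


theorem mainTheorem8:
  fixes M :: "'a measure" and W X :: "nat \<Rightarrow> real \<Rightarrow> 'a \<Rightarrow> real"
    and g :: "real \<Rightarrow> real" and n :: nat and \<delta> :: real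
  assumes "prob_space M"
    and "n \<ge> 2"
    and "0 < \<delta>" and "\<delta> < 1/2"
    and "admissible \<delta> g"
    and "Liminf (at_right 0) (\<lambda>x. ereal (x * g x)) > -\<infinity>"
    and "Limsup (at_right 0) (\<lambda>x. ereal (x * g x)) < 0"
    and "std_BM M n W"
    and "\<forall>i<n. adapted_to M (bm_filt M n W) (X i)"
    and "\<forall>\<omega>\<in>space M. \<forall>i<n. X i 0 \<omega> > 0 \<and> mweight n X i 0 \<omega> \<in> {0<..<1-\<delta>}"
  shows "AE \<omega> in M. \<forall>T>0. solves_on n \<delta> g W X T \<omega> \<longrightarrow>
           (\<forall>i<n. \<exists>\<epsilon>>0. \<forall>t\<in>{0..<T}. mweight n X i t \<omega> \<ge> \<epsilon>)"
proof (rule AE_I2, intro allI impI)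
  fix \<omega> T i assume \<omega>: "\<omega> \<in> space M" and T: "T > 0" and sol: "solves_on n \<delta> g W X T \<omega>" and i: "i < n"
  have n0: "n > 0" using assms(2) by simp
  have gc: "continuous_on {0<..<1-\<delta>} g" using assms(5) unfolding admissible_def by auto
  have Wc: "continuous_on {0..} (\<lambda>t. W k t \<omega>)" if "k < n" for k
    using assms(8) \<omega> that unfolding std_BM_def by auto
  have "\<exists>b. \<forall>t\<in>{0..T}. \<bar>W k t \<omega> - W k 0 \<omega>\<bar> \<le> b" if "k < n" for k
  proof -
    have "continuous_on {0..T} (\<lambda>t. W k t \<omega> - W k 0 \<omega>)"
      using Wc[OF that] by (intro continuous_on_diff continuous_on_const continuous_on_subset[OF Wc[OF that]]) auto
    then have "compact ((\<lambda>t. W k t \<omega> - W k 0 \<omega>) ` {0..T})" by (intro compact_continuous_image) auto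
    then obtain b where "\<forall>z\<in>(\<lambda>t. W k t \<omega> - W k 0 \<omega>) ` {0..T}. norm z \<le> b"
      using compact_imp_bounded[THEN bounded_iff[THEN iffD1]] by blast
    then show ?thesis by auto
  qed
  then have "\<forall>k. \<exists>b. k < n \<longrightarrow> (\<forall>t\<in>{0..T}. \<bar>W k t \<omega> - W k 0 \<omega>\<bar> \<le> b)" by blast
  from choice[OF this] obtain bb where bb: "\<forall>k<n. \<forall>t\<in>{0..T}. \<bar>W k t \<omega> - W k 0 \<omega>\<bar> \<le> bb k" by blast
  define B where "B = (\<Sum>k<n. \<bar>bb k\<bar>)"
  have wb: "\<forall>k<n. \<forall>t\<in>{0..<T}. \<bar>W k t \<omega> - W k 0 \<omega>\<bar> \<le> B"
  proof (intro allI impI ballI)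
    fix k t assume k: "k < n" and t: "t \<in> {0..<T}"
    have "\<bar>bb k\<bar> \<le> B" unfolding B_def using k by (intro member_le_sum) auto
    then show "\<bar>W k t \<omega> - W k 0 \<omega>\<bar> \<le> B" using bb k t by force
  qed
  obtain L where L: "\<forall>y\<in>{exp(-2*B)/n..<1-\<delta>}. g y \<ge> -L"
    using g_low[OF assms(5) _ assms(3), of "exp(-2*B)/n"] n0 by auto
  obtain \<eta> where eta: "\<eta> > 0" "\<forall>y\<in>{0<..<\<eta>}. g y < -L"
    using g_high[OF assms(7)] by blast
  have "\<exists>\<epsilon>>0. \<forall>t\<in>{0..<T}. X i t \<omega> / (\<Sum>j<n. X j t \<omega>) \<ge> \<epsilon>"
  proof (rule core[where x="\<lambda>k t. X k t \<omega>" and w="\<lambda>k t. W k t \<omega> - W k 0 \<omega>" and B=B and \<delta>=\<delta> and g=g and L=L and \<eta>=\<eta> and i=i and n=n and T=T,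
        OF n0 T _ _ _ _ _ wb gc L eta i])
    show "\<forall>k<n. continuous_on {0..<T} (\<lambda>t. X k t \<omega>)" using sol unfolding solves_on_def by auto
    show "\<forall>k<n. continuous_on {0..<T} (\<lambda>t. W k t \<omega> - W k 0 \<omega>)"
      using Wc by (auto intro!: continuous_on_diff continuous_on_subset[OF Wc])
    show "\<forall>k<n. \<forall>t\<in>{0..<T}. X k t \<omega> > 0" using sol unfolding solves_on_def by auto
    show "\<forall>k<n. \<forall>t\<in>{0..<T}. X k t \<omega> / (\<Sum>j<n. X j t \<omega>) \<in> {0<..<1-\<delta>}"
      using sol unfolding solves_on_def mweight_def cap_def by blast
    show "\<forall>k<n. \<forall>t\<in>{0..<T}. ln (X k t \<omega>) = ln (X k 0 \<omega>) - integral {0..t} (\<lambda>s. g (X k s \<omega> / (\<Sum>j<n. X j s \<omega>))) + (W k t \<omega> - W k 0 \<omega>)"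
      using sol unfolding solves_on_def mweight_def cap_def by blast
  qed
  then show "\<exists>\<epsilon>>0. \<forall>t\<in>{0..<T}. mweight n X i t \<omega> \<ge> \<epsilon>" by (simp add: mweight_def cap_def)
qed

end
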